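(* Let $V$ be a ground model, $\kappa$ an infinite cardinal, and $\mathbb{A}\in V$ an atomless Boolean algebra. If $\dot{\mathcal{U}}$ and $\dot{\mathcal{V}}$ are $\mathbb{M}_\kappa$-names for ultrafilters on $\mathbb{A}$ such that $\Vdash_{\mathbb{M}_\kappa}\dot{\mathcal{U}}\neq\dot{\mathcal{V}}$, then for every $\varepsilon>0$ there are $p\in\mathbb{M}_\kappa$ and $C\in\mathbb{A}$ such that $\lambda_\kappa(p)>1/4-\varepsilon$ and $p\Vdash C\in\dot{\mathcal{U}}\triangle\dot{\mathcal{V}}$.
   Context: $\mathbb{M}_\kappa=Bor(2^\kappa)/\mathcal{N}_\kappa$ is the measure algebra of the standard product measure $\lambda_\kappa$ on $2^\kappa$ ($\lambda_\kappa$ also denotes the induced strictly positive measure on $\mathbb{M}_\kappa$), used as a forcing notion. An $\mathbb{M}_\kappa$-name for an ultrafilter on $\mathbb{A}$ is a name $\dot{\mathcal{U}}$ with $\Vdash_{\mathbb{M}_\kappa}$ "$\dot{\mathcal{U}}$ is an ultrafilter on $\mathbb{A}$". *)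

theory Defs
  imports "HOL-Probability.Probability"
begin

text \<open>The standard product probability measure on the Cantor cube 2^kappa, where kappa is
  the cardinality of the index type 'k. Its sigma-algebra is the product sigma-algebra;
  the measure algebra M_kappa is sets modulo null sets, represented here by measurable
  sets compared up to null sets.\<close>
definition cantor_measure :: "('k \<Rightarrow> bool) measure" where
  "cantor_measure = PiM UNIV (\<lambda>_. measure_pmf (bernoulli_pmf (1/2)))"

definition symdiff :: "'x set \<Rightarrow> 'x set \<Rightarrow> 'x set" where
  "symdiff A B = (A - B) \<union> (B - A)"

definition null_eq :: "'x measure \<Rightarrow> 'x set \<Rightarrow> 'x set \<Rightarrow> bool" where
  "null_eq M A B \<longleftrightarrow> A \<in> sets M \<and> B \<in> sets M \<and> measure M (symdiff A B) = 0"

definition atomless_ba :: "'a::boolean_algebra itself \<Rightarrow> bool" where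
  "atomless_ba _ \<longleftrightarrow> (\<forall>a::'a. a \<noteq> bot \<longrightarrow> (\<exists>b. bot < b \<and> b < a))"

text \<open>A name for an ultrafilter on the ground-model Boolean algebra 'a, given by its
  Boolean values u a = [[a in U]] in the measure algebra of M: these are exactly the
  Boolean homomorphisms from 'a into the measure algebra.\<close>
definition ultrafilter_name :: "'x measure \<Rightarrow> ('a::boolean_algebra \<Rightarrow> 'x set) \<Rightarrow> bool" where
  "ultrafilter_name M u \<longleftrightarrow>
     (\<forall>a. u a \<in> sets M) \<and>
     null_eq M (u top) (space M) \<and>
     (\<forall>a b. null_eq M (u (inf a b)) (u a \<inter> u b)) \<and>
     (\<forall>a. null_eq M (u (- a)) (space M - u a))"

text \<open>The top element forces U \<noteq> V: the Boolean value
  sup_a ([[a in U]] symdiff [[a in V]]) is 1, i.e. no positive-measure set is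
  disjoint (mod null) from all of them.\<close>
definition forces_neq :: "'x measure \<Rightarrow> ('a \<Rightarrow> 'x set) \<Rightarrow> ('a \<Rightarrow> 'x set) \<Rightarrow> bool" where
  "forces_neq M u v \<longleftrightarrow>
     (\<forall>P \<in> sets M. (\<forall>a. measure M (P \<inter> symdiff (u a) (v a)) = 0) \<longrightarrow> measure M P = 0)"

text \<open>p forces C in U symdiff V: p is below [[C in U]] symdiff [[C in V]] in the measure algebra.\<close>
definition forces_in_symdiff :: "'x measure \<Rightarrow> 'x set \<Rightarrow> 'a \<Rightarrow> ('a \<Rightarrow> 'x set) \<Rightarrow> ('a \<Rightarrow> 'x set) \<Rightarrow> bool" where
  "forces_in_symdiff M p C u v \<longleftrightarrow> measure M (p - symdiff (u C) (v C)) = 0"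

end

theory Submission
  imports Defs
begin

definition bxor :: "'a::boolean_algebra \<Rightarrow> 'a \<Rightarrow> 'a" where
  "bxor x y = sup (inf x (- y)) (inf (- x) y)"

interpretation bxa: abstract_boolean_algebra_sym_diff
  "inf :: 'a::boolean_algebra \<Rightarrow> _" sup uminus bot top bxor
  by (unfold_locales) (simp add: bxor_def)

interpretation bxs: comm_monoid_set "bxor :: 'a::boolean_algebra \<Rightarrow> _" bot
  by unfold_locales

lemma bxs_flip:
  fixes S :: "'a::boolean_algebra set"
  assumes "finite S"
  shows "bxs.F id (symdiff S {a}) = bxor a (bxs.F id S)"
proof (cases "a \<in> S")
  case True
  have e: "symdiff S {a} = S - {a}" using True by (auto simp: symdiff_def)
  have "bxs.F id S = bxor a (bxs.F id (S - {a}))"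
    using bxs.remove[OF assms True] by simp
  then show ?thesis using e by (simp add: bxa.xor_left_self)
next
  case False
  have e: "symdiff S {a} = insert a S" using False by (auto simp: symdiff_def)
  show ?thesis using e bxs.insert[OF assms False] by simp
qed

lemma ae_null_eq:
  assumes "finite_measure M" "null_eq M A B"
  shows "AE x in M. (x \<in> A \<longleftrightarrow> x \<in> B)"
proof -
  have s: "symdiff A B \<in> sets M" using assms(2) unfolding null_eq_def symdiff_def by auto
  have "emeasure M (symdiff A B) = 0"
    using assms finite_measure.emeasure_eq_measure[OF assms(1)] unfolding null_eq_def by simp
  then have "symdiff A B \<in> null_sets M" using s by auto
  then show ?thesis by (rule AE_I') (auto simp: symdiff_def)
qed

lemma ae_xor:
  assumes fm: "finite_measure M" and u: "ultrafilter_name M u"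
  shows "AE x in M. ((x \<in> u (bxor a b)) = ((x \<in> u a) \<noteq> (x \<in> u b)))"
proof -
  have I: "AE x in M. (x \<in> u (inf c d) \<longleftrightarrow> x \<in> u c \<and> x \<in> u d)" for c d
  proof -
    have "null_eq M (u (inf c d)) (u c \<inter> u d)" using u unfolding ultrafilter_name_def by blast
    from ae_null_eq[OF fm this] show ?thesis by simp
  qed
  have N: "AE x in M. (x \<in> u (- c) \<longleftrightarrow> x \<in> space M \<and> x \<notin> u c)" for c
  proof -
    have "null_eq M (u (- c)) (space M - u c)" using u unfolding ultrafilter_name_def by blast
    from ae_null_eq[OF fm this] show ?thesis by simp
  qed
  let ?c1 = "inf a (- b)" and ?c2 = "inf (- a) b"
  have e: "bxor a b = - (inf (- ?c1) (- ?c2))" by (simp add: bxor_def)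
  show ?thesis
    unfolding e
    using AE_space N[of a] N[of b] I[of a "-b"] I[of "-a" b] N[of ?c1] N[of ?c2]
      I[of "- ?c1" "- ?c2"] N[of "inf (- ?c1) (- ?c2)"]
    by eventually_elim auto
qed

lemma prob_cantor: "prob_space cantor_measure"
  unfolding cantor_measure_def
  by (intro prob_space_PiM prob_space_measure_pmf)

lemma count_half:
  fixes g :: "'b set \<Rightarrow> real"
  assumes "finite F" "a \<in> F"
    and fl: "\<And>S. S \<subseteq> F \<Longrightarrow> g (symdiff S {a}) = 1 - g S"
  shows "(\<Sum>S\<in>Pow F. g S) = card (Pow F) / 2"
proof -
  have inv: "symdiff (symdiff S {a}) {a} = S" for S by (auto simp: symdiff_def)
  have mem: "S \<in> Pow F \<Longrightarrow> symdiff S {a} \<in> Pow F" for S using assms(2) by (auto simp: symdiff_def)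
  have "(\<Sum>S\<in>Pow F. g S) = (\<Sum>S\<in>Pow F. g (symdiff S {a}))"
    by (rule sum.reindex_bij_witness[of _ "\<lambda>S. symdiff S {a}" "\<lambda>S. symdiff S {a}"])
       (use assms(2) in \<open>auto simp: inv, auto simp: symdiff_def\<close>)
  also have "\<dots> = (\<Sum>S\<in>Pow F. 1 - g S)" by (intro sum.cong) (auto simp: fl)
  also have "\<dots> = card (Pow F) - (\<Sum>S\<in>Pow F. g S)" by (simp add: sum_subtractf)
  finally show ?thesis by simp
qed

lemma avg:
  fixes u v :: "'a::boolean_algebra \<Rightarrow> 'x set"
  assumes fm: "prob_space M" and u: "ultrafilter_name M u" and v: "ultrafilter_name M v"
    and F: "finite F"
  shows "\<exists>S \<subseteq> F. measure M (\<Union>a\<in>F. symdiff (u a) (v a))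
            \<le> 2 * measure M (symdiff (u (bxs.F id S)) (v (bxs.F id S)))"
proof -
  interpret prob_space M by fact
  have fmm: "finite_measure M" by unfold_locales
  define D where "D a = symdiff (u a) (v a)" for a
  define X where "X S = bxs.F id S" for S :: "'a set"
  define U where "U = (\<Union>a\<in>F. D a)"
  define P where "P = Pow F"
  have Ds: "D a \<in> sets M" for a using u v unfolding D_def symdiff_def ultrafilter_name_def by auto
  have Us: "U \<in> sets M" unfolding U_def using F Ds by auto
  have finP: "finite P" using F P_def by simp
  have AE1: "AE x in M. \<forall>S\<in>P. \<forall>a\<in>F. (x \<in> D (X (symdiff S {a}))) = ((x \<in> D a) \<noteq> (x \<in> D (X S)))"
  proof (intro AE_finite_allI finP F)
    fix S a assume S: "S \<in> P" and a: "a \<in> F"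
    have fS: "finite S" using S F P_def finite_subset by auto
    have e: "X (symdiff S {a}) = bxor a (X S)" unfolding X_def by (rule bxs_flip[OF fS])
    show "AE x in M. (x \<in> D (X (symdiff S {a}))) = ((x \<in> D a) \<noteq> (x \<in> D (X S)))"
      unfolding e using ae_xor[OF fmm u, of a "X S"] ae_xor[OF fmm v, of a "X S"]
      by eventually_elim (auto simp: D_def symdiff_def)
  qed
  have AE2: "AE x in M. card P / 2 * indicator U x \<le> (\<Sum>S\<in>P. indicator (D (X S)) x :: real)"
    using AE1
  proof eventually_elim
    case (elim x)
    show ?case
    proof (cases "x \<in> U")
      case False
      then show ?thesis by (simp add: sum_nonneg)
    next
      case True
      then obtain a where a: "a \<in> F" "x \<in> D a" unfolding U_def by auto
      have "(\<Sum>S\<in>Pow F. indicator (D (X S)) x :: real) = card (Pow F) / 2"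
      proof (rule count_half[OF F a(1)])
        fix S assume "S \<subseteq> F"
        then have "S \<in> P" using P_def by auto
        then show "indicator (D (X (symdiff S {a}))) x = 1 - (indicator (D (X S)) x :: real)"
          using elim a by (auto simp: indicator_def)
      qed
      then show ?thesis using True P_def by simp
    qed
  qed
  have int: "integrable M (indicator A :: _ \<Rightarrow> real)" if "A \<in> sets M" for A
    using that by (intro integrable_real_indicator) (auto simp: less_top[symmetric])
  have "integral\<^sup>L M (\<lambda>x. card P / 2 * indicator U x) \<le> integral\<^sup>L M (\<lambda>x. \<Sum>S\<in>P. indicator (D (X S)) x :: real)"
    by (rule integral_mono_AE[OF _ _ AE2]) (auto intro!: int Us Ds)
  also have "\<dots> = (\<Sum>S\<in>P. measure M (D (X S)))"
    by (subst Bochner_Integration.integral_sum) (auto intro!: int Ds simp: sets.Int_space_eq2 Ds)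
  finally have ineq: "card P / 2 * measure M U \<le> (\<Sum>S\<in>P. measure M (D (X S)))"
    by (simp add: sets.Int_space_eq2 Us)
  show ?thesis
  proof (rule ccontr)
    assume "\<not> ?thesis"
    then have lt: "\<And>S. S \<in> P \<Longrightarrow> 2 * measure M (D (X S)) < measure M U"
      unfolding P_def U_def D_def X_def by force
    have "(\<Sum>S\<in>P. 2 * measure M (D (X S))) < (\<Sum>S\<in>P. measure M U)"
      by (rule sum_strict_mono[OF finP]) (auto simp: P_def lt)
    then show False using ineq by (simp add: sum_distrib_left[symmetric])
  qed
qed

lemma exhaust:
  fixes u v :: "'a::boolean_algebra \<Rightarrow> 'x set"
  assumes fm: "prob_space M" and u: "ultrafilter_name M u" and v: "ultrafilter_name M v"
    and nq: "forces_neq M u v" and d: "\<delta> > 0"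
  shows "\<exists>F. finite F \<and> measure M (\<Union>a\<in>F. symdiff (u a) (v a)) > 1 - \<delta>"
proof -
  interpret prob_space M by fact
  define D where "D a = symdiff (u a) (v a)" for a
  define Uf where "Uf F = (\<Union>a\<in>F. D a)" for F
  have Ds: "D a \<in> sets M" for a using u v unfolding D_def symdiff_def ultrafilter_name_def by auto
  have Ufs: "finite F \<Longrightarrow> Uf F \<in> sets M" for F unfolding Uf_def using Ds by auto
  define T where "T = {measure M (Uf F) | F. finite F}"
  have Tne: "T \<noteq> {}" unfolding T_def by blast
  have Tb: "bdd_above T" unfolding T_def by (intro bdd_aboveI[of _ 1]) auto
  define s where "s = Sup T"
  have upper: "finite F \<Longrightarrow> measure M (Uf F) \<le> s" for F
    unfolding s_def by (rule cSup_upper[OF _ Tb]) (auto simp: T_def)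
  have "\<forall>n. \<exists>F. finite F \<and> measure M (Uf F) > s - inverse (real (Suc n))"
  proof
    fix n
    have "s - inverse (real (Suc n)) < Sup T" unfolding s_def by simp
    then obtain t where "t \<in> T" "t > s - inverse (real (Suc n))"
      using less_cSup_iff[OF Tne Tb] by blast
    then show "\<exists>F. finite F \<and> measure M (Uf F) > s - inverse (real (Suc n))"
      unfolding T_def by blast
  qed
  then obtain Fs where Fs: "\<And>n. finite (Fs n)" "\<And>n. measure M (Uf (Fs n)) > s - inverse (real (Suc n))"
    by metis
  define K where "K N = (\<Union>n\<le>N. Fs n)" for N
  have Kf: "finite (K N)" for N unfolding K_def using Fs(1) by auto
  have Kmono: "incseq K" unfolding K_def incseq_def by (auto intro: order_trans)
  define G where "G = (\<Union>N. Uf (K N))"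
  have Gs: "G \<in> sets M" unfolding G_def using Ufs Kf by auto
  have GDa: "measure M (G \<union> D a) \<le> s" for a
  proof -
    define H where "H N = Uf (insert a (K N))" for N
    have Hr: "range H \<subseteq> sets M" unfolding H_def using Ufs Kf by auto
    have Hi: "incseq H" using Kmono unfolding H_def Uf_def incseq_def by auto
    have HU: "(\<Union>N. H N) = G \<union> D a" unfolding H_def G_def Uf_def by auto
    have "(\<lambda>N. measure M (H N)) \<longlonglongrightarrow> measure M (G \<union> D a)"
      using finite_Lim_measure_incseq[OF Hr Hi] HU by simp
    moreover have "\<forall>N. measure M (H N) \<le> s" unfolding H_def using upper Kf by auto
    ultimately show ?thesis by (intro LIMSEQ_le_const2) auto
  qed
  have sG: "s \<le> measure M G"
  proof (rule ccontr)
    assume "\<not> s \<le> measure M G"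
    then have "0 < s - measure M G" by simp
    then obtain n where n: "n > 0" "inverse (real n) < s - measure M G"
      using ex_inverse_of_nat_less by blast
    then obtain m where m: "n = Suc m" using gr0_implies_Suc by blast
    have "Uf (Fs m) \<subseteq> G" unfolding G_def Uf_def K_def by blast
    then have "measure M (Uf (Fs m)) \<le> measure M G" using Gs by (intro finite_measure_mono) auto
    then show False using Fs(2)[of m] n m by simp
  qed
  have z: "measure M ((space M - G) \<inter> symdiff (u a) (v a)) = 0" for a
  proof -
    have e: "(space M - G) \<inter> symdiff (u a) (v a) = D a - G"
      using sets.sets_into_space[OF Ds[of a]] unfolding D_def by auto
    have "measure M (G \<union> D a) = measure M G + measure M (D a - G)"
      by (rule finite_measure_Union'[OF Gs Ds])
    then have "measure M (D a - G) \<le> 0" using GDa[of a] sG by simp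
    then show ?thesis using e measure_nonneg[of M "D a - G"] by simp
  qed
  have "measure M (space M - G) = 0"
    using nq z Gs unfolding forces_neq_def by auto
  then have G1: "measure M G = 1" using prob_compl[OF Gs] by simp
  have "measure M G \<le> measure M (G \<union> D undefined)" using Gs Ds by (intro finite_measure_mono) auto
  then have "1 \<le> s" using GDa[of undefined] G1 by simp
  then have "1 - \<delta> < Sup T" using d s_def by simp
  then obtain t where "t \<in> T" "t > 1 - \<delta>" using less_cSup_iff[OF Tne Tb] by blast
  then show ?thesis unfolding T_def Uf_def D_def by blast
qed

theorem theorem7p6:
  fixes u v :: "'a::boolean_algebra \<Rightarrow> ('k \<Rightarrow> bool) set"
  assumes "infinite (UNIV :: 'k set)"
    and "atomless_ba TYPE('a)"
    and "ultrafilter_name cantor_measure u"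
    and "ultrafilter_name cantor_measure v"
    and "forces_neq cantor_measure u v"
  shows "\<forall>\<epsilon>::real. \<epsilon> > 0 \<longrightarrow>
           (\<exists>p \<in> sets cantor_measure. \<exists>C::'a.
              measure cantor_measure p > 1/4 - \<epsilon> \<and> forces_in_symdiff cantor_measure p C u v)"
proof (intro allI impI)
  fix \<epsilon> :: real assume e: "\<epsilon> > 0"
  let ?M = "cantor_measure :: ('k \<Rightarrow> bool) measure"
  have pm: "prob_space ?M" by (rule prob_cantor)
  obtain F where F: "finite F" "measure ?M (\<Union>a\<in>F. symdiff (u a) (v a)) > 1 - (1/2 + 2 * \<epsilon>)"
    using exhaust[OF pm assms(3,4,5), of "1/2 + 2 * \<epsilon>"] e by auto
  obtain S where S: "measure ?M (\<Union>a\<in>F. symdiff (u a) (v a))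
            \<le> 2 * measure ?M (symdiff (u (bxs.F id S)) (v (bxs.F id S)))"
    using avg[OF pm assms(3,4) F(1)] by blast
  define C where "C = bxs.F id S"
  define p where "p = symdiff (u C) (v C)"
  have ps: "p \<in> sets ?M" using assms(3,4) unfolding p_def symdiff_def ultrafilter_name_def by auto
  have "measure ?M p > 1/4 - \<epsilon>" using F(2) S unfolding p_def C_def by simp
  moreover have "forces_in_symdiff ?M p C u v" unfolding forces_in_symdiff_def p_def by simp
  ultimately show "\<exists>p \<in> sets ?M. \<exists>C::'a. measure ?M p > 1/4 - \<epsilon> \<and> forces_in_symdiff ?M p C u v"
    using ps by blast
qed

end
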